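(* Let $n\ge 1$, $h=1/(2n)$. Consider a fine grid on $\Omega^f=[0,1]\times[0,1]$ with points $((i-1)h,(j-1)h)$, $i=1,\dots,2n$ (periodic in $x$), where row $j=1$ lies on the interface $\Gamma=\{y=0\}$ (no ghost points are used on the fine side); and a coarse grid on $\Omega^c=[0,1]\times[-1,0]$ with points $(2(i-1)h,2(j-n)h)$, $i=1,\dots,n$ (periodic in $x$), where row $j=n$ lies on $\Gamma$ and $j=n+1$ is a row of ghost points. Let $(\boldsymbol u,\boldsymbol v)_h=h^2\sum_i\sum_j w^f_ju_{ij}v_{ij}$ and $(\boldsymbol u,\boldsymbol v)_{2h}=(2h)^2\sum_i\sum_j w^c_ju_{ij}v_{ij}$ be weighted inner products on the fine and coarse grids (weights positive; $w_1:=w^f_1$ is the weight of the interface row of the fine grid), and let $\langle\boldsymbol u_\Gamma,\boldsymbol v_\Gamma\rangle_h=h\sum_{i=1}^{2n}u_iv_i$, $\langle\boldsymbol u_\Gamma,\boldsymbol v_\Gamma\rangle_{2h}=2h\sum_{i=1}^n u_iv_i$. For a grid function $\boldsymbol u$, $\boldsymbol u_\Gamma$ (also written $\boldsymbol u|_\Gamma$) is its restriction to the interface row. Assume a linear operator $G_f(\mu)$ on fine grid functions (no ghost points) with a linear map $\boldsymbol v\mapsto\boldsymbol v'_\Gamma\in\mathbb R^{2n}$ such that $(\boldsymbol u,G_f(\mu)\boldsymbol v)_h=-S_f(\boldsymbol u,\boldsymbol v)-\langle\boldsymbol u_\Gamma,\boldsymbol v'_\Gamma\rangle_h$ for all $\boldsymbol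 u,\boldsymbol v$, and a linear operator $\widetilde G_c(\mu)$ on coarse grid functions with ghost points with a linear map $\widetilde{\boldsymbol v}\mapsto\widetilde{\boldsymbol v}'_\Gamma\in\mathbb R^n$ such that $(\boldsymbol u,\widetilde G_c(\mu)\widetilde{\boldsymbol v})_{2h}=-S_c(\boldsymbol u,\boldsymbol v)+\langle\boldsymbol u_\Gamma,\widetilde{\boldsymbol v}'_\Gamma\rangle_{2h}$ for all $\boldsymbol u,\widetilde{\boldsymbol v}$, where $S_f,S_c$ are symmetric positive semi-definite bilinear forms. Let $\boldsymbol\rho^f,\boldsymbol\rho^c$ be diagonal matrices with positive diagonal entries, and let $\mathcal P:\mathbb R^n\to\mathbb R^{2n}$ and $\mathcal R:\mathbb R^{2n}\to\mathbb R^n$ be linear maps with $\mathcal P=2\mathcal R^T$. Consider smooth time-dependent grid functions $\boldsymbol f(t)$ (fine) and $\widetilde{\boldsymbol c}(t)$ (coarse, with ghost points) satisfying, for all $t$: $\boldsymbol\rho^c\boldsymbol c_{tt}=\widetilde G_c(\mu)\widetilde{\boldsymbol c}$; $\boldsymbol f_{:,1}=\mathcal P(\boldsymbol c_{:,n})$; $(\boldsymbol\rho^f\boldsymbol f_{tt})_{:,1}=(G_f(\mu)\boldsymbol f)_{:,1}+\boldsymbol\eta$ and $(\boldsymbol\rho^f\boldsymbol f_{tt})_{:,j}=(G_f(\mu)\boldsymbol f)_{:,j}$ for $j\ge2$, where $\boldsymbol\eta=\boldsymbol\rho^f|_\Gamma\,\mathcal P\big((\boldsymbol\rho^c)^{-1}\widetilde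 G_c(\mu)\widetilde{\boldsymbol c}|_\Gamma\big)-G_f(\mu)\boldsymbol f|_\Gamma$; and $\widetilde{\boldsymbol c}'_\Gamma=\mathcal R\big(\boldsymbol f'_\Gamma-hw_1\boldsymbol\eta\big)$. Then $\frac{d}{dt}\left[(\boldsymbol f_t,\boldsymbol\rho^f\boldsymbol f_t)_h+S_f(\boldsymbol f,\boldsymbol f)+(\boldsymbol c_t,\boldsymbol\rho^c\boldsymbol c_t)_{2h}+S_c(\boldsymbol c,\boldsymbol c)\right]=0.$
   Context: This is the "improved SBP-GP" semi-discretization of the two-dimensional acoustic wave equation $\rho u_{tt}=\nabla\cdot(\mu\nabla u)$ across a 1:2 mesh refinement interface at $y=0$, with continuity of solution and normal flux imposed using only ghost points on the coarse side; periodic in $x$, and contributions from the outer boundaries are not included (as encoded in the assumed summation-by-parts identities). $\boldsymbol c$ denotes the restriction of $\widetilde{\boldsymbol c}$ to non-ghost points; colon notation $\boldsymbol f_{:,j}$ means the $j$-th row (all $i$); $\boldsymbol\rho^f|_\Gamma$ is the diagonal matrix of $\boldsymbol\rho^f$-entries on the interface row. In the paper $\boldsymbol v'_\Gamma$ has entries $\mu_{i,1}\boldsymbol b_1^T\boldsymbol v_{i,:}$, a boundary approximation of $\mu\,\partial_y v$. *)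

theory Defs
  imports Complex_Main
begin

text \<open>Grid functions are indexed by pairs (i,j) (i = x-index, j = y-index).
Fine grid: i = 1..2n, j = 1..2n+1 (row j = 1 is the interface).
Coarse grid: i = 1..n, j = 0..n (row j = n is the interface), ghost row j = n+1.\<close>

type_synonym gridfun = "nat \<times> nat \<Rightarrow> real"

definition hh :: "nat \<Rightarrow> real" where
  "hh n = 1 / (2 * real n)"

definition fine_pts :: "nat \<Rightarrow> (nat \<times> nat) set" where
  "fine_pts n = {1..2*n} \<times> {1..2*n+1}"

definition coarse_pts :: "nat \<Rightarrow> (nat \<times> nat) set" where
  "coarse_pts n = {1..n} \<times> {0..n}"

definition coarse_ghost_pts :: "nat \<Rightarrow> (nat \<times> nat) set" where
  "coarse_ghost_pts n = {1..n} \<times> {0..n+1}"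

definition ip_fine :: "nat \<Rightarrow> (nat \<Rightarrow> real) \<Rightarrow> gridfun \<Rightarrow> gridfun \<Rightarrow> real" where
  "ip_fine n w u v = (hh n)^2 * (\<Sum>i=1..2*n. \<Sum>j=1..2*n+1. w j * u (i,j) * v (i,j))"

definition ip_coarse :: "nat \<Rightarrow> (nat \<Rightarrow> real) \<Rightarrow> gridfun \<Rightarrow> gridfun \<Rightarrow> real" where
  "ip_coarse n w u v = (2 * hh n)^2 * (\<Sum>i=1..n. \<Sum>j=0..n. w j * u (i,j) * v (i,j))"

definition bip_fine :: "nat \<Rightarrow> (nat \<Rightarrow> real) \<Rightarrow> (nat \<Rightarrow> real) \<Rightarrow> real" where
  "bip_fine n a b = hh n * (\<Sum>i=1..2*n. a i * b i)"

definition bip_coarse :: "nat \<Rightarrow> (nat \<Rightarrow> real) \<Rightarrow> (nat \<Rightarrow> real) \<Rightarrow> real" where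
  "bip_coarse n a b = 2 * hh n * (\<Sum>i=1..n. a i * b i)"

definition row :: "gridfun \<Rightarrow> nat \<Rightarrow> nat \<Rightarrow> real" where
  "row u r = (\<lambda>i. u (i, r))"

definition linear_on :: "'a set \<Rightarrow> 'b set \<Rightarrow> (('a \<Rightarrow> real) \<Rightarrow> ('b \<Rightarrow> real)) \<Rightarrow> bool" where
  "linear_on D D' G \<longleftrightarrow>
     (\<forall>u v a b. \<forall>p\<in>D'. G (\<lambda>q. a * u q + b * v q) p = a * G u p + b * G v p) \<and>
     (\<forall>u v. (\<forall>q\<in>D. u q = v q) \<longrightarrow> (\<forall>p\<in>D'. G u p = G v p))"

definition sym_psd_form :: "'a set \<Rightarrow> (('a \<Rightarrow> real) \<Rightarrow> ('a \<Rightarrow> real) \<Rightarrow> real) \<Rightarrow> bool" where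
  "sym_psd_form D S \<longleftrightarrow>
     (\<forall>u u' v v'. (\<forall>q\<in>D. u q = u' q \<and> v q = v' q) \<longrightarrow> S u v = S u' v') \<and>
     (\<forall>u u' v a b. S (\<lambda>q. a * u q + b * u' q) v = a * S u v + b * S u' v) \<and>
     (\<forall>u v. S u v = S v u) \<and>
     (\<forall>u. 0 \<le> S u u)"

text \<open>Prolongation P : R^n -> R^{2n} and restriction R : R^{2n} -> R^n, given by matrices
Pm (2n x n, entries Pm (i,k)) and Rm (n x 2n, entries Rm (k,i)).\<close>
definition prolong :: "nat \<Rightarrow> (nat \<times> nat \<Rightarrow> real) \<Rightarrow> (nat \<Rightarrow> real) \<Rightarrow> nat \<Rightarrow> real" where
  "prolong n Pm a = (\<lambda>i. \<Sum>k=1..n. Pm (i,k) * a k)"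

definition restr :: "nat \<Rightarrow> (nat \<times> nat \<Rightarrow> real) \<Rightarrow> (nat \<Rightarrow> real) \<Rightarrow> nat \<Rightarrow> real" where
  "restr n Rm b = (\<lambda>k. \<Sum>i=1..2*n. Rm (k,i) * b i)"

end

theory Submission
  imports Defs
begin

definition ev :: "'a \<Rightarrow> 'a \<Rightarrow> real" where "ev p = (\<lambda>q. if q = p then 1 else 0)"

lemma form_lin_sum:
  assumes S: "sym_psd_form D S" and A: "finite A"
  shows "S (\<lambda>q. \<Sum>p\<in>A. a p * g p q) v = (\<Sum>p\<in>A. a p * S (g p) v)"
proof -
  have lin: "\<And>u u' v a b. S (\<lambda>q. a * u q + b * u' q) v = a * S u v + b * S u' v"
    using S unfolding sym_psd_form_def by blast
  show ?thesis using A
  proof (induction A rule: finite_induct)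
    case empty
    have "S (\<lambda>q. 0 * v q + 0 * v q) v = 0 * S v v + 0 * S v v" by (rule lin)
    then show ?case by simp
  next
    case (insert x F)
    have "S (\<lambda>q. a x * g x q + 1 * (\<Sum>p\<in>F. a p * g p q)) v
        = a x * S (g x) v + 1 * S (\<lambda>q. \<Sum>p\<in>F. a p * g p q) v"
      by (rule lin)
    then show ?case using insert by simp
  qed
qed

lemma form_expand1:
  assumes S: "sym_psd_form D S" and D: "finite D"
  shows "S u v = (\<Sum>p\<in>D. u p * S (ev p) v)"
proof -
  have "S u v = S (\<lambda>q. \<Sum>p\<in>D. u p * ev p q) v"
  proof -
    have h: "\<forall>q\<in>D. u q = (\<Sum>p\<in>D. u p * ev p q) \<and> v q = v q"
      using D by (simp add: ev_def if_distrib cong: if_cong)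
    have cong: "\<And>u u' v v'. (\<forall>q\<in>D. u q = u' q \<and> v q = v' q) \<Longrightarrow> S u v = S u' v'"
      using S unfolding sym_psd_form_def by blast
    show ?thesis by (rule cong[OF h])
  qed
  also have "\<dots> = (\<Sum>p\<in>D. u p * S (ev p) v)" by (rule form_lin_sum[OF S D])
  finally show ?thesis .
qed

lemma form_expand:
  assumes S: "sym_psd_form D S" and D: "finite D"
  shows "S u v = (\<Sum>p\<in>D. \<Sum>q\<in>D. u p * v q * S (ev p) (ev q))"
proof -
  have sym: "\<And>a b. S a b = S b a" using S unfolding sym_psd_form_def by blast
  have "S u v = (\<Sum>p\<in>D. u p * S (ev p) v)" by (rule form_expand1[OF S D])
  also have "\<dots> = (\<Sum>p\<in>D. u p * (\<Sum>q\<in>D. v q * S (ev p) (ev q)))"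
    apply (rule sum.cong, simp)
    apply (subst sym, subst form_expand1[OF S D], subst sym, simp)
    done
  also have "\<dots> = (\<Sum>p\<in>D. \<Sum>q\<in>D. u p * v q * S (ev p) (ev q))"
    by (simp add: sum_distrib_left mult.assoc)
  finally show ?thesis .
qed

lemma form_deriv:
  assumes S: "sym_psd_form D S" and D: "finite D"
    and d: "\<forall>p\<in>D. ((\<lambda>r. u r p) has_real_derivative u' p) (at t)"
  shows "((\<lambda>r. S (u r) (u r)) has_real_derivative 2 * S u' (u t)) (at t)"
proof -
  have sym: "\<And>a b. S a b = S b a" using S unfolding sym_psd_form_def by blast
  have eq: "(\<lambda>r. S (u r) (u r)) = (\<lambda>r. \<Sum>p\<in>D. \<Sum>q\<in>D. u r p * u r q * S (ev p) (ev q))"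
    by (rule ext, rule form_expand[OF S D])
  have "((\<lambda>r. \<Sum>p\<in>D. \<Sum>q\<in>D. u r p * u r q * S (ev p) (ev q)) has_real_derivative
      (\<Sum>p\<in>D. \<Sum>q\<in>D. (u' p * u t q + u t p * u' q) * S (ev p) (ev q))) (at t)"
    apply (rule DERIV_sum, rule DERIV_sum)
    apply (rule DERIV_cmult_right)
    apply (rule DERIV_mult[THEN DERIV_cong])
    using d by auto
  moreover have "(\<Sum>p\<in>D. \<Sum>q\<in>D. (u' p * u t q + u t p * u' q) * S (ev p) (ev q))
      = S u' (u t) + S (u t) u'"
    unfolding form_expand[OF S D, of u' "u t"] form_expand[OF S D, of "u t" u']
    by (simp add: algebra_simps sum.distrib)
  ultimately show ?thesis using sym[of "u t" u'] eq by simp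
qed
theorem mainTheorem2:
  fixes n :: nat
    and wf wc :: "nat \<Rightarrow> real"
    and Gf :: "gridfun \<Rightarrow> gridfun" and fprime :: "gridfun \<Rightarrow> nat \<Rightarrow> real"
    and Gc :: "gridfun \<Rightarrow> gridfun" and cprime :: "gridfun \<Rightarrow> nat \<Rightarrow> real"
    and Sf Sc :: "gridfun \<Rightarrow> gridfun \<Rightarrow> real"
    and rhof rhoc :: gridfun
    and Pm Rm :: "nat \<times> nat \<Rightarrow> real"
    and f fd fdd c cd cdd :: "real \<Rightarrow> gridfun"
    and t :: real
  assumes n: "n \<ge> 1"
    and wf_pos: "\<forall>j\<in>{1..2*n+1}. wf j > 0"
    and wc_pos: "\<forall>j\<in>{0..n}. wc j > 0"
    and Gf_lin: "linear_on (fine_pts n) (fine_pts n) Gf"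
    and fprime_lin: "linear_on (fine_pts n) {1..2*n} fprime"
    and Gc_lin: "linear_on (coarse_ghost_pts n) (coarse_pts n) Gc"
    and cprime_lin: "linear_on (coarse_ghost_pts n) {1..n} cprime"
    and Sf_form: "sym_psd_form (fine_pts n) Sf"
    and Sc_form: "sym_psd_form (coarse_pts n) Sc"
    and SBP_f: "\<forall>u v. ip_fine n wf u (Gf v) = - Sf u v - bip_fine n (row u 1) (fprime v)"
    and SBP_c: "\<forall>u v. ip_coarse n wc u (Gc v) = - Sc u v + bip_coarse n (row u n) (cprime v)"
    and rhof_pos: "\<forall>p\<in>fine_pts n. rhof p > 0"
    and rhoc_pos: "\<forall>p\<in>coarse_pts n. rhoc p > 0"
    and P_R: "\<forall>i\<in>{1..2*n}. \<forall>k\<in>{1..n}. Pm (i,k) = 2 * Rm (k,i)"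
    and f_d: "\<forall>s. \<forall>p\<in>fine_pts n. ((\<lambda>r. f r p) has_real_derivative fd s p) (at s)"
    and f_dd: "\<forall>s. \<forall>p\<in>fine_pts n. ((\<lambda>r. fd r p) has_real_derivative fdd s p) (at s)"
    and c_d: "\<forall>s. \<forall>p\<in>coarse_pts n. ((\<lambda>r. c r p) has_real_derivative cd s p) (at s)"
    and c_dd: "\<forall>s. \<forall>p\<in>coarse_pts n. ((\<lambda>r. cd r p) has_real_derivative cdd s p) (at s)"
    and eq_c: "\<forall>s. \<forall>p\<in>coarse_pts n. rhoc p * cdd s p = Gc (c s) p"
    and eq_interface: "\<forall>s. \<forall>i\<in>{1..2*n}. f s (i,1) = prolong n Pm (row (c s) n) i"
    and eq_f1: "\<forall>s. \<forall>i\<in>{1..2*n}. rhof (i,1) * fdd s (i,1) = Gf (f s) (i,1)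
                  + (rhof (i,1) * prolong n Pm (\<lambda>k. Gc (c s) (k,n) / rhoc (k,n)) i - Gf (f s) (i,1))"
    and eq_f: "\<forall>s. \<forall>i\<in>{1..2*n}. \<forall>j\<in>{2..2*n+1}. rhof (i,j) * fdd s (i,j) = Gf (f s) (i,j)"
    and eq_flux: "\<forall>s. \<forall>k\<in>{1..n}. cprime (c s) k = restr n Rm (\<lambda>i. fprime (f s) i
                  - hh n * wf 1 * (rhof (i,1) * prolong n Pm (\<lambda>k. Gc (c s) (k,n) / rhoc (k,n)) i - Gf (f s) (i,1))) k"
  shows "((\<lambda>s. ip_fine n wf (fd s) (\<lambda>p. rhof p * fd s p) + Sf (f s) (f s)
              + ip_coarse n wc (cd s) (\<lambda>p. rhoc p * cd s p) + Sc (c s) (c s))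
          has_real_derivative 0) (at t)"
proof -
  define h where "h = hh n"
  have finF: "finite (fine_pts n)" unfolding fine_pts_def by simp
  have finC: "finite (coarse_pts n)" unfolding coarse_pts_def by simp
  have dSf: "((\<lambda>s. Sf (f s) (f s)) has_real_derivative 2 * Sf (fd t) (f t)) (at t)"
    by (rule form_deriv[OF Sf_form finF]) (use f_d in blast)
  have dSc: "((\<lambda>s. Sc (c s) (c s)) has_real_derivative 2 * Sc (cd t) (c t)) (at t)"
    by (rule form_deriv[OF Sc_form finC]) (use c_d in blast)
  have dIf: "((\<lambda>s. ip_fine n wf (fd s) (\<lambda>p. rhof p * fd s p)) has_real_derivative
     (hh n)^2 * (\<Sum>i=1..2*n. \<Sum>j=1..2*n+1. 2 * (wf j * fd t (i,j) * (rhof (i,j) * fdd t (i,j))))) (at t)"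
    unfolding ip_fine_def
  proof (intro DERIV_cmult DERIV_sum)
    fix i j assume ij: "i \<in> {1..2*n}" "j \<in> {1..2*n+1}"
    then have d: "((\<lambda>s. fd s (i,j)) has_real_derivative fdd t (i,j)) (at t)"
      using f_dd unfolding fine_pts_def by blast
    show "((\<lambda>s. wf j * fd s (i,j) * (rhof (i,j) * fd s (i,j))) has_real_derivative
       2 * (wf j * fd t (i,j) * (rhof (i,j) * fdd t (i,j)))) (at t)"
      by (rule DERIV_cong[OF DERIV_mult[OF DERIV_cmult[OF d] DERIV_cmult[OF d]]]) (simp add: algebra_simps)
  qed
  have dIc: "((\<lambda>s. ip_coarse n wc (cd s) (\<lambda>p. rhoc p * cd s p)) has_real_derivative
     (2 * hh n)^2 * (\<Sum>i=1..n. \<Sum>j=0..n. 2 * (wc j * cd t (i,j) * (rhoc (i,j) * cdd t (i,j))))) (at t)"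
    unfolding ip_coarse_def
  proof (intro DERIV_cmult DERIV_sum)
    fix i j assume ij: "i \<in> {1..n}" "j \<in> {0..n}"
    then have d: "((\<lambda>s. cd s (i,j)) has_real_derivative cdd t (i,j)) (at t)"
      using c_dd unfolding coarse_pts_def by blast
    show "((\<lambda>s. wc j * cd s (i,j) * (rhoc (i,j) * cd s (i,j))) has_real_derivative
       2 * (wc j * cd t (i,j) * (rhoc (i,j) * cdd t (i,j)))) (at t)"
      by (rule DERIV_cong[OF DERIV_mult[OF DERIV_cmult[OF d] DERIV_cmult[OF d]]]) (simp add: algebra_simps)
  qed
  define eta where "eta i = rhof (i,1) * prolong n Pm (\<lambda>k. Gc (c t) (k,n) / rhoc (k,n)) i - Gf (f t) (i,1)" for i
  define g where "g i = fprime (f t) i - hh n * wf 1 * eta i" for i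
  have A: "(\<Sum>i=1..2*n. \<Sum>j=1..2*n+1. wf j * fd t (i,j) * (rhof (i,j) * fdd t (i,j)))
     = (\<Sum>i=1..2*n. \<Sum>j=1..2*n+1. wf j * fd t (i,j) * Gf (f t) (i,j)) + (\<Sum>i=1..2*n. wf 1 * fd t (i,1) * eta i)"
  proof -
    have "(\<Sum>j=1..2*n+1. wf j * fd t (i,j) * (rhof (i,j) * fdd t (i,j)))
       = (\<Sum>j=1..2*n+1. wf j * fd t (i,j) * Gf (f t) (i,j)) + wf 1 * fd t (i,1) * eta i"
      if i: "i \<in> {1..2*n}" for i
    proof -
      have e1: "rhof (i,1) * fdd t (i,1) = Gf (f t) (i,1) + eta i"
        using eq_f1 i unfolding eta_def by blast
      have e2: "(\<Sum>j=2..2*n+1. wf j * fd t (i,j) * (rhof (i,j) * fdd t (i,j)))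
          = (\<Sum>j=2..2*n+1. wf j * fd t (i,j) * Gf (f t) (i,j))"
        using eq_f i by (intro sum.cong) auto
      have s1: "\<And>F. (\<Sum>j=1..2*n+1. F j) = F 1 + (\<Sum>j=2..2*n+1. F j)"
        by (subst sum.atLeast_Suc_atMost) (auto simp: numeral_2_eq_2)
      show ?thesis unfolding s1[where F="\<lambda>j. wf j * fd t (i,j) * (rhof (i,j) * fdd t (i,j))"]
          s1[where F="\<lambda>j. wf j * fd t (i,j) * Gf (f t) (i,j)"] e1 e2
        by (simp add: algebra_simps)
    qed
    then show ?thesis by (simp add: sum.distrib)
  qed
  have B: "(hh n)^2 * (\<Sum>i=1..2*n. \<Sum>j=1..2*n+1. wf j * fd t (i,j) * Gf (f t) (i,j))
      = - Sf (fd t) (f t) - hh n * (\<Sum>i=1..2*n. fd t (i,1) * fprime (f t) i)"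
    using SBP_f unfolding ip_fine_def bip_fine_def row_def by metis
  have C1: "(\<Sum>i=1..n. \<Sum>j=0..n. wc j * cd t (i,j) * (rhoc (i,j) * cdd t (i,j)))
      = (\<Sum>i=1..n. \<Sum>j=0..n. wc j * cd t (i,j) * Gc (c t) (i,j))"
    using eq_c unfolding coarse_pts_def by (intro sum.cong) auto
  have C: "(2 * hh n)^2 * (\<Sum>i=1..n. \<Sum>j=0..n. wc j * cd t (i,j) * Gc (c t) (i,j))
      = - Sc (cd t) (c t) + 2 * hh n * (\<Sum>k=1..n. cd t (k,n) * cprime (c t) k)"
    using SBP_c unfolding ip_coarse_def bip_coarse_def row_def by metis
  have D: "fd t (i,1) = (\<Sum>k=1..n. Pm (i,k) * cd t (k,n))" if i: "i \<in> {1..2*n}" for i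
  proof -
    have d1: "((\<lambda>s. f s (i,1)) has_real_derivative fd t (i,1)) (at t)"
      using f_d i n unfolding fine_pts_def by auto
    have feq: "(\<lambda>s. f s (i,1)) = (\<lambda>s. \<Sum>k=1..n. Pm (i,k) * c s (k,n))"
      using eq_interface i unfolding prolong_def row_def by auto
    have d2: "((\<lambda>s. \<Sum>k=1..n. Pm (i,k) * c s (k,n)) has_real_derivative (\<Sum>k=1..n. Pm (i,k) * cd t (k,n))) (at t)"
    proof (intro DERIV_sum DERIV_cmult)
      fix k assume "k \<in> {1..n}"
      then show "((\<lambda>s. c s (k,n)) has_real_derivative cd t (k,n)) (at t)"
        using c_d unfolding coarse_pts_def by auto
    qed
    show ?thesis using DERIV_unique[OF d1] d2 feq by simp
  qed
  have E: "(\<Sum>i=1..2*n. fd t (i,1) * g i) = 2 * (\<Sum>k=1..n. cd t (k,n) * cprime (c t) k)"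
  proof -
    have "(\<Sum>i=1..2*n. fd t (i,1) * g i) = (\<Sum>i=1..2*n. \<Sum>k=1..n. 2 * (cd t (k,n) * (Rm (k,i) * g i)))"
      using D P_R by (intro sum.cong) (auto simp: sum_distrib_right intro!: sum.cong)
    also have "\<dots> = (\<Sum>k=1..n. \<Sum>i=1..2*n. 2 * (cd t (k,n) * (Rm (k,i) * g i)))"
      by (rule sum.swap)
    also have "\<dots> = 2 * (\<Sum>k=1..n. cd t (k,n) * (\<Sum>i=1..2*n. Rm (k,i) * g i))"
      by (simp add: sum_distrib_left)
    also have "\<dots> = 2 * (\<Sum>k=1..n. cd t (k,n) * cprime (c t) k)"
      using eq_flux unfolding restr_def g_def eta_def by (auto intro!: sum.cong)
    finally show ?thesis .
  qed
  have E2: "(\<Sum>i=1..2*n. fd t (i,1) * g i) = (\<Sum>i=1..2*n. fd t (i,1) * fprime (f t) i)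
      - hh n * (\<Sum>i=1..2*n. wf 1 * fd t (i,1) * eta i)"
    unfolding g_def by (simp add: algebra_simps sum_subtractf sum_distrib_left)
  have tot: "(hh n)^2 * (\<Sum>i=1..2*n. \<Sum>j=1..2*n+1. 2 * (wf j * fd t (i,j) * (rhof (i,j) * fdd t (i,j))))
     + 2 * Sf (fd t) (f t)
     + (2 * hh n)^2 * (\<Sum>i=1..n. \<Sum>j=0..n. 2 * (wc j * cd t (i,j) * (rhoc (i,j) * cdd t (i,j))))
     + 2 * Sc (cd t) (c t) = 0"
  proof -
    have alg: "\<And>(hv::real) X Z sf Y sc Fp Cp Gs.
        hv^2 * X = - sf - hv * Fp \<Longrightarrow> (2*hv)^2 * Y = - sc + 2 * hv * Cp \<Longrightarrow>
        Gs = 2 * Cp \<Longrightarrow> Gs = Fp - hv * Z \<Longrightarrow>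
        hv^2 * (2 * (X + Z)) + 2 * sf + (2*hv)^2 * (2 * Y) + 2 * sc = 0"
    proof -
      fix hv X Z sf Y sc Fp Cp Gs :: real
      assume a: "hv^2 * X = - sf - hv * Fp" "(2*hv)^2 * Y = - sc + 2 * hv * Cp"
        "Gs = 2 * Cp" "Gs = Fp - hv * Z"
      have "hv^2 * (2 * (X + Z)) + 2 * sf + (2*hv)^2 * (2 * Y) + 2 * sc
          = 2 * (hv^2 * X) + 2 * sf + 2 * ((2*hv)^2 * Y) + 2 * sc + 2 * hv^2 * Z"
        by (simp add: algebra_simps)
      also have "\<dots> = - 2 * hv * (Fp - hv * Z - 2 * Cp)"
        unfolding a(1) a(2) by (simp add: algebra_simps power2_eq_square)
      also have "\<dots> = 0" using a(3) a(4) by simp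
      finally show "hv^2 * (2 * (X + Z)) + 2 * sf + (2*hv)^2 * (2 * Y) + 2 * sc = 0" .
    qed
    show ?thesis
      unfolding sum_distrib_left[symmetric, of 2] A C1
      by (rule alg[OF B C E E2])
  qed
  show ?thesis
    using DERIV_add[OF DERIV_add[OF DERIV_add[OF dIf dSf] dIc] dSc] tot by simp
qed

end
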